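(* Let $k\ge1$, $\beta>0$, $J,J_p\in\mathbb{R}$, $a=e^{2\beta J}$, $b=e^{2\beta J_p}$. Let $\mathbf{u}=\{\mathbf{u}_{xy}\}$, with $\mathbf{u}_{xy}=(u_{xy,1},u_{xy,2},u_{xy,3})\in(0,\infty)^3$ for each $x\in V$ and $y\in S(x)$, satisfy for every such edge $$u_{xy,1}=a\prod_{z\in S(y)}\frac{b u_{yz,3}+1}{u_{yz,3}+b},\quad u_{xy,2}=a\prod_{z\in S(y)}\frac{(b u_{yz,2}+1)u_{yz,3}}{(u_{yz,3}+b)u_{yz,1}},\quad u_{xy,3}=a\prod_{z\in S(y)}\frac{(b u_{yz,3}+1)u_{yz,1}}{(u_{yz,2}+b)u_{yz,3}}.$$ Then two things hold. (i) There exist boundary fields $\mathbf{h}$ with $u_{xy,1}=a e^{h_{xy,++}+h_{xy,-+}}$, $u_{xy,2}=a e^{h_{xy,--}+h_{xy,-+}}$ and $u_{xy,3}=a e^{h_{xy,++}+h_{xy,+-}}$ for all edges, such that the measures $\mu^{(n)}_{\mathbf{h}}$ are compatible. (ii) All boundary fields $\mathbf{h}$ satisfying these relations give the same family $\{\mu^{(n)}_{\mathbf{h}}\}_{n\ge1}$. Consequently there is a unique Gibbs measure $\mu_{\mathbf{u}}$ associated with $\mathbf{u}$.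
   Context: $\Gamma^k_+=(V,\Lambda)$ is the semi-infinite Cayley tree of order $k$ with root $x^0$. We write $|x|=d(x,x^0)$, $W_n=\{|x|=n\}$, $V_n=\{|x|\le n\}$, and $S(x)$ for the set of direct successors of $x$. Nearest neighbours $\langle x,y\rangle$ satisfy $d(x,y)=1$. Prolonged next-nearest neighbours $\widetilde{>x,y<}$ satisfy $d(x,y)=2$ and $|x|\ne|y|$. The Hamiltonian is $$H_n(\sigma)=-J_p\sum_{\widetilde{>x,y<}\subset V_n}\sigma(x)\sigma(y)-J\sum_{\langle x,y\rangle\subset V_n}\sigma(x)\sigma(y)$$ for $\sigma\in\{-1,+1\}^{V_n}$. A boundary field $\mathbf{h}$ assigns reals $h_{xy,++},h_{xy,+-},h_{xy,-+},h_{xy,--}$ to each edge. The measures are $$\mu^{(n)}_{\mathbf{h}}(\sigma)=Z_n^{-1}\exp\Big[-\beta H_n(\sigma)+\sum_{x\in W_{n-1}}\sum_{y\in S(x)}\sigma(x)\sigma(y)h_{xy,\sigma(x)\sigma(y)}\Big],$$ with $Z_n$ the normalizing constant. They are compatible if $\sum_{\omega\in\{-1,+1\}^{W_n}}\mu^{(n)}_{\mathbf{h}}(\sigma\vee\omega)=\mu^{(n-1)}_{\mathbf{h}}(\sigma)$ for all $n\ge2$ and all $\sigma\in\{-1,+1\}^{V_{n-1}}$. A compatible family determines, by Kolmogorov's theorem, a unique probability measure on $\{-1,+1\}^V$ with these marginals, called a Gibbs measure. *)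

theory Defs
  imports Main "HOL-Library.FuncSet" Complex_Main
begin

(* Semi-infinite Cayley tree of order k: vertices are words over {0..<k},
   root = [], |x| = length x, direct successors S(x) = {x @ [i] | i < k}. *)

definition tree_V :: "nat \<Rightarrow> nat list set" where
  "tree_V k = {x. set x \<subseteq> {..<k}}"

definition succs :: "nat \<Rightarrow> nat list \<Rightarrow> nat list set" where
  "succs k x = {x @ [i] | i. i < k}"

definition ball_V :: "nat \<Rightarrow> nat \<Rightarrow> nat list set" where
  "ball_V k n = {x \<in> tree_V k. length x \<le> n}"

definition sphere_W :: "nat \<Rightarrow> nat \<Rightarrow> nat list set" where
  "sphere_W k n = {x \<in> tree_V k. length x = n}"

definition nn_pairs :: "nat \<Rightarrow> nat \<Rightarrow> (nat list \<times> nat list) set" where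
  "nn_pairs k n = {(x, y). x \<in> ball_V k n \<and> y \<in> ball_V k n \<and> y \<in> succs k x}"

(* prolonged next-nearest-neighbour pairs in V_n: d(x,z) = 2 and |x| \<noteq> |z|,
   i.e. z is a grandchild of x; each unordered pair listed once *)
definition pnnn_pairs :: "nat \<Rightarrow> nat \<Rightarrow> (nat list \<times> nat list) set" where
  "pnnn_pairs k n = {(x, z). x \<in> ball_V k n \<and> z \<in> ball_V k n \<and>
                        (\<exists>y \<in> succs k x. z \<in> succs k y)}"

definition configs_on :: "nat list set \<Rightarrow> (nat list \<Rightarrow> real) set" where
  "configs_on A = (A \<rightarrow>\<^sub>E {-1, 1})"

definition hamiltonian ::
  "nat \<Rightarrow> real \<Rightarrow> real \<Rightarrow> nat \<Rightarrow> (nat list \<Rightarrow> real) \<Rightarrow> real" where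
  "hamiltonian k J Jp n \<sigma> =
     - Jp * (\<Sum>(x, y) \<in> pnnn_pairs k n. \<sigma> x * \<sigma> y)
     - J * (\<Sum>(x, y) \<in> nn_pairs k n. \<sigma> x * \<sigma> y)"

(* boundary field: h x y s t = h_{xy, s t} for signs s = sigma(x), t = sigma(y)
   in {-1,1}; e.g. h x y (-1) 1 = h_{xy,-+}. *)
type_synonym bfield = "nat list \<Rightarrow> nat list \<Rightarrow> real \<Rightarrow> real \<Rightarrow> real"

definition boundary_term :: "nat \<Rightarrow> bfield \<Rightarrow> nat \<Rightarrow> (nat list \<Rightarrow> real) \<Rightarrow> real" where
  "boundary_term k h n \<sigma> =
     (\<Sum>x \<in> sphere_W k (n - 1). \<Sum>y \<in> succs k x. \<sigma> x * \<sigma> y * h x y (\<sigma> x) (\<sigma> y))"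

definition gibbs_weight ::
  "nat \<Rightarrow> real \<Rightarrow> real \<Rightarrow> real \<Rightarrow> bfield \<Rightarrow> nat \<Rightarrow> (nat list \<Rightarrow> real) \<Rightarrow> real" where
  "gibbs_weight k \<beta> J Jp h n \<sigma> =
     exp (- \<beta> * hamiltonian k J Jp n \<sigma> + boundary_term k h n \<sigma>)"

definition partition_fn :: "nat \<Rightarrow> real \<Rightarrow> real \<Rightarrow> real \<Rightarrow> bfield \<Rightarrow> nat \<Rightarrow> real" where
  "partition_fn k \<beta> J Jp h n =
     (\<Sum>\<sigma> \<in> configs_on (ball_V k n). gibbs_weight k \<beta> J Jp h n \<sigma>)"

definition mu_n ::
  "nat \<Rightarrow> real \<Rightarrow> real \<Rightarrow> real \<Rightarrow> bfield \<Rightarrow> nat \<Rightarrow> (nat list \<Rightarrow> real) \<Rightarrow> real" where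
  "mu_n k \<beta> J Jp h n \<sigma> = gibbs_weight k \<beta> J Jp h n \<sigma> / partition_fn k \<beta> J Jp h n"

definition join_conf :: "nat \<Rightarrow> nat \<Rightarrow> (nat list \<Rightarrow> real) \<Rightarrow> (nat list \<Rightarrow> real) \<Rightarrow> (nat list \<Rightarrow> real)" where
  "join_conf k n \<sigma> \<omega> = (\<lambda>x. if x \<in> ball_V k (n - 1) then \<sigma> x else \<omega> x)"

definition compatible :: "nat \<Rightarrow> real \<Rightarrow> real \<Rightarrow> real \<Rightarrow> bfield \<Rightarrow> bool" where
  "compatible k \<beta> J Jp h \<longleftrightarrow>
     (\<forall>n \<ge> 2. \<forall>\<sigma> \<in> configs_on (ball_V k (n - 1)).
        (\<Sum>\<omega> \<in> configs_on (sphere_W k n). mu_n k \<beta> J Jp h n (join_conf k n \<sigma> \<omega>))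
          = mu_n k \<beta> J Jp h (n - 1) \<sigma>)"

definition u_h_rel ::
  "nat \<Rightarrow> real \<Rightarrow> (nat list \<Rightarrow> nat list \<Rightarrow> real) \<Rightarrow> (nat list \<Rightarrow> nat list \<Rightarrow> real)
     \<Rightarrow> (nat list \<Rightarrow> nat list \<Rightarrow> real) \<Rightarrow> bfield \<Rightarrow> bool" where
  "u_h_rel k a u1 u2 u3 h \<longleftrightarrow>
     (\<forall>x \<in> tree_V k. \<forall>y \<in> succs k x.
        u1 x y = a * exp (h x y 1 1 + h x y (-1) 1) \<and>
        u2 x y = a * exp (h x y (-1) (-1) + h x y (-1) 1) \<and>
        u3 x y = a * exp (h x y 1 1 + h x y 1 (-1)))"

end

theory Submission
  imports Defs
begin


lemma succs_eq: "succs k x = (\<lambda>i. x @ [i]) ` {..<k}"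
  by (auto simp: succs_def)

lemma finite_succs[simp]: "finite (succs k x)"
  by (simp add: succs_eq)

lemma finite_sphere[simp]: "finite (sphere_W k n)"
proof -
  have "sphere_W k n = {xs. set xs \<subseteq> {..<k} \<and> length xs = n}"
    by (auto simp: sphere_W_def tree_V_def)
  thus ?thesis using finite_lists_length_eq[of "{..<k}" n] by simp
qed

lemma finite_ball[simp]: "finite (ball_V k n)"
proof -
  have "ball_V k n = {xs. set xs \<subseteq> {..<k} \<and> length xs \<le> n}"
    by (auto simp: ball_V_def tree_V_def)
  thus ?thesis using finite_lists_length_le[of "{..<k}" n] by simp
qed

lemma sphere_Suc_D:
  assumes "y \<in> sphere_W k (Suc m)"
  shows "butlast y \<in> sphere_W k m" "y \<in> succs k (butlast y)" "y \<noteq> []"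
proof -
  have ne: "y \<noteq> []" using assms by (auto simp: sphere_W_def)
  thus "y \<noteq> []" .
  have e: "y = butlast y @ [last y]" using ne by simp
  have "set y \<subseteq> {..<k}" using assms by (auto simp: sphere_W_def tree_V_def)
  hence "last y < k" "set (butlast y) \<subseteq> {..<k}" using ne
    by (auto dest: in_set_butlastD) (meson last_in_set lessThan_iff subsetD)
  then show "butlast y \<in> sphere_W k m" "y \<in> succs k (butlast y)"
    using assms e by (auto simp: sphere_W_def tree_V_def succs_def)
qed

lemma succs_sphere:
  assumes "x \<in> sphere_W k m" "y \<in> succs k x"
  shows "y \<in> sphere_W k (Suc m)" "butlast y = x"
  using assms by (auto simp: sphere_W_def tree_V_def succs_def)

lemma sum_sphere_Suc:
  "(\<Sum>x\<in>sphere_W k m. \<Sum>y\<in>succs k x. f x y) = (\<Sum>y\<in>sphere_W k (Suc m). f (butlast y) y)"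
proof -
  have "(\<Sum>x\<in>sphere_W k m. \<Sum>y\<in>succs k x. f x y) = (\<Sum>(x,y)\<in>Sigma (sphere_W k m) (succs k). f x y)"
    by (rule sum.Sigma) auto
  also have "\<dots> = (\<Sum>y\<in>sphere_W k (Suc m). f (butlast y) y)"
    by (rule sum.reindex_bij_witness[where i="\<lambda>y. (butlast y, y)" and j=snd])
       (auto dest: sphere_Suc_D succs_sphere)
  finally show ?thesis .
qed

lemma prod_sphere_Suc:
  "(\<Prod>x\<in>sphere_W k m. \<Prod>y\<in>succs k x. f x y) = (\<Prod>y\<in>sphere_W k (Suc m). f (butlast y) y)"
proof -
  have "(\<Prod>x\<in>sphere_W k m. \<Prod>y\<in>succs k x. f x y) = (\<Prod>(x,y)\<in>Sigma (sphere_W k m) (succs k). f x y)"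
    by (rule prod.Sigma) auto
  also have "\<dots> = (\<Prod>y\<in>sphere_W k (Suc m). f (butlast y) y)"
    by (rule prod.reindex_bij_witness[where i="\<lambda>y. (butlast y, y)" and j=snd])
       (auto dest: sphere_Suc_D succs_sphere)
  finally show ?thesis .
qed

lemma ball_Suc: "ball_V k (Suc m) = ball_V k m \<union> sphere_W k (Suc m)"
  by (auto simp: ball_V_def sphere_W_def)

lemma nn_Suc: "nn_pairs k (Suc m) = nn_pairs k m \<union> (\<lambda>y. (butlast y, y)) ` sphere_W k (Suc m)"
proof (intro equalityI subsetI)
  fix p assume p: "p \<in> nn_pairs k (Suc m)"
  then obtain x y where pe: "p = (x, y)" and x: "x \<in> ball_V k (Suc m)" and y: "y \<in> ball_V k (Suc m)"
    and xy: "y \<in> succs k x" by (auto simp: nn_pairs_def)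
  show "p \<in> nn_pairs k m \<union> (\<lambda>y. (butlast y, y)) ` sphere_W k (Suc m)"
  proof (cases "length y \<le> m")
    case True
    then show ?thesis using x y xy pe by (auto simp: nn_pairs_def ball_V_def succs_def)
  next
    case False
    hence "y \<in> sphere_W k (Suc m)" using y by (auto simp: ball_V_def sphere_W_def)
    moreover have "x = butlast y" using xy by (auto simp: succs_def)
    ultimately show ?thesis using pe by auto
  qed
next
  fix p assume "p \<in> nn_pairs k m \<union> (\<lambda>y. (butlast y, y)) ` sphere_W k (Suc m)"
  then show "p \<in> nn_pairs k (Suc m)"
  proof
    assume "p \<in> nn_pairs k m" thus ?thesis by (auto simp: nn_pairs_def ball_V_def)
  next
    assume "p \<in> (\<lambda>y. (butlast y, y)) ` sphere_W k (Suc m)"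
    then obtain y where y: "y \<in> sphere_W k (Suc m)" and pe: "p = (butlast y, y)" by auto
    from sphere_Suc_D[OF y] y show ?thesis unfolding pe nn_pairs_def ball_Suc by (auto simp: ball_V_def sphere_W_def)
  qed
qed

lemma pnnn_Suc:
  assumes "m \<ge> 1"
  shows "pnnn_pairs k (Suc m) = pnnn_pairs k m \<union> (\<lambda>y. (butlast (butlast y), y)) ` sphere_W k (Suc m)"
proof (intro equalityI subsetI)
  fix p assume p: "p \<in> pnnn_pairs k (Suc m)"
  then obtain x z y where pe: "p = (x, z)" and x: "x \<in> ball_V k (Suc m)" and z: "z \<in> ball_V k (Suc m)"
    and xy: "y \<in> succs k x" and yz: "z \<in> succs k y" by (auto simp: pnnn_pairs_def)
  show "p \<in> pnnn_pairs k m \<union> (\<lambda>y. (butlast (butlast y), y)) ` sphere_W k (Suc m)"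
  proof (cases "length z \<le> m")
    case True
    then show ?thesis using x z xy yz pe by (auto simp: pnnn_pairs_def ball_V_def succs_def)
  next
    case False
    hence "z \<in> sphere_W k (Suc m)" using z by (auto simp: ball_V_def sphere_W_def)
    moreover have "x = butlast (butlast z)" using xy yz by (auto simp: succs_def butlast_append)
    ultimately show ?thesis using pe by auto
  qed
next
  fix p assume "p \<in> pnnn_pairs k m \<union> (\<lambda>y. (butlast (butlast y), y)) ` sphere_W k (Suc m)"
  then show "p \<in> pnnn_pairs k (Suc m)"
  proof
    assume "p \<in> pnnn_pairs k m" thus ?thesis by (auto simp: pnnn_pairs_def ball_V_def)
  next
    assume "p \<in> (\<lambda>y. (butlast (butlast y), y)) ` sphere_W k (Suc m)"
    then obtain y where y: "y \<in> sphere_W k (Suc m)" and pe: "p = (butlast (butlast y), y)" by auto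
    have b1: "butlast y \<in> sphere_W k m" "y \<in> succs k (butlast y)" using sphere_Suc_D[OF y] by auto
    obtain m' where m': "m = Suc m'" using assms by (cases m) auto
    have b2: "butlast (butlast y) \<in> sphere_W k m'" "butlast y \<in> succs k (butlast (butlast y))"
      using sphere_Suc_D[OF b1(1)[unfolded m']] by auto
    have "butlast (butlast y) \<in> ball_V k (Suc m)" "y \<in> ball_V k (Suc m)"
      using b2 y m' by (auto simp: ball_V_def sphere_W_def)
    then show ?thesis unfolding pe pnnn_pairs_def using b1 b2 by auto
  qed
qed



lemma sphere_not_ball: "y \<in> sphere_W k (Suc m) \<Longrightarrow> y \<notin> ball_V k m"
  by (auto simp: sphere_W_def ball_V_def)

lemma sphere_in_ball: "y \<in> sphere_W k m \<Longrightarrow> y \<in> ball_V k m"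
  by (auto simp: sphere_W_def ball_V_def)

lemma bl_in_ball: "y \<in> sphere_W k (Suc m) \<Longrightarrow> butlast y \<in> ball_V k m"
  using sphere_Suc_D(1) sphere_in_ball by blast

lemma bbl_in_ball: "y \<in> sphere_W k (Suc m) \<Longrightarrow> butlast (butlast y) \<in> ball_V k m"
proof -
  assume y: "y \<in> sphere_W k (Suc m)"
  have "butlast y \<in> ball_V k m" using bl_in_ball[OF y] .
  thus ?thesis by (auto simp: ball_V_def tree_V_def dest: in_set_butlastD)
qed

lemma nn_in_ball: "(x, y) \<in> nn_pairs k m \<Longrightarrow> x \<in> ball_V k m \<and> y \<in> ball_V k m"
  by (auto simp: nn_pairs_def)

lemma pnnn_in_ball: "(x, y) \<in> pnnn_pairs k m \<Longrightarrow> x \<in> ball_V k m \<and> y \<in> ball_V k m"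
  by (auto simp: pnnn_pairs_def)

lemma finite_nn[simp]: "finite (nn_pairs k m)"
  by (rule finite_subset[of _ "ball_V k m \<times> ball_V k m"]) (auto simp: nn_pairs_def)

lemma finite_pnnn[simp]: "finite (pnnn_pairs k m)"
  by (rule finite_subset[of _ "ball_V k m \<times> ball_V k m"]) (auto simp: pnnn_pairs_def)

lemma join_in: "x \<in> ball_V k m \<Longrightarrow> join_conf k (Suc m) \<sigma> \<omega> x = \<sigma> x"
  by (simp add: join_conf_def)

lemma join_out: "y \<in> sphere_W k (Suc m) \<Longrightarrow> join_conf k (Suc m) \<sigma> \<omega> y = \<omega> y"
  by (simp add: join_conf_def sphere_not_ball)

lemma ham_split:
  assumes "m \<ge> 1"
  shows "hamiltonian k J Jp (Suc m) (join_conf k (Suc m) \<sigma> \<omega>) =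
     hamiltonian k J Jp m \<sigma>
     - Jp * (\<Sum>y\<in>sphere_W k (Suc m). \<sigma> (butlast (butlast y)) * \<omega> y)
     - J * (\<Sum>y\<in>sphere_W k (Suc m). \<sigma> (butlast y) * \<omega> y)"
proof -
  let ?t = "join_conf k (Suc m) \<sigma> \<omega>"
  let ?W = "sphere_W k (Suc m)"
  have d1: "pnnn_pairs k m \<inter> (\<lambda>y. (butlast (butlast y), y)) ` ?W = {}"
    using sphere_not_ball by (fastforce dest: pnnn_in_ball)
  have d2: "nn_pairs k m \<inter> (\<lambda>y. (butlast y, y)) ` ?W = {}"
    using sphere_not_ball by (fastforce dest: nn_in_ball)
  have i1: "inj_on (\<lambda>y. (butlast (butlast y), y)) ?W" by (auto intro: inj_onI)
  have i2: "inj_on (\<lambda>y. (butlast y, y)) ?W" by (auto intro: inj_onI)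
  have s1: "(\<Sum>(x, y)\<in>pnnn_pairs k (Suc m). ?t x * ?t y) =
      (\<Sum>(x, y)\<in>pnnn_pairs k m. \<sigma> x * \<sigma> y) + (\<Sum>y\<in>?W. \<sigma> (butlast (butlast y)) * \<omega> y)"
  proof -
    have "(\<Sum>(x, y)\<in>pnnn_pairs k (Suc m). ?t x * ?t y) =
      (\<Sum>(x, y)\<in>pnnn_pairs k m. ?t x * ?t y) + (\<Sum>(x, y)\<in>(\<lambda>y. (butlast (butlast y), y)) ` ?W. ?t x * ?t y)"
      unfolding pnnn_Suc[OF assms] by (rule sum.union_disjoint) (auto simp: d1)
    also have "(\<Sum>(x, y)\<in>pnnn_pairs k m. ?t x * ?t y) = (\<Sum>(x, y)\<in>pnnn_pairs k m. \<sigma> x * \<sigma> y)"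
      by (rule sum.cong) (auto dest!: pnnn_in_ball simp: join_in)
    also have "(\<Sum>(x, y)\<in>(\<lambda>y. (butlast (butlast y), y)) ` ?W. ?t x * ?t y) =
        (\<Sum>y\<in>?W. \<sigma> (butlast (butlast y)) * \<omega> y)"
      by (subst sum.reindex[OF i1]) (auto intro!: sum.cong simp: join_in join_out bbl_in_ball)
    finally show ?thesis .
  qed
  have s2: "(\<Sum>(x, y)\<in>nn_pairs k (Suc m). ?t x * ?t y) =
      (\<Sum>(x, y)\<in>nn_pairs k m. \<sigma> x * \<sigma> y) + (\<Sum>y\<in>?W. \<sigma> (butlast y) * \<omega> y)"
  proof -
    have "(\<Sum>(x, y)\<in>nn_pairs k (Suc m). ?t x * ?t y) =
      (\<Sum>(x, y)\<in>nn_pairs k m. ?t x * ?t y) + (\<Sum>(x, y)\<in>(\<lambda>y. (butlast y, y)) ` ?W. ?t x * ?t y)"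
      unfolding nn_Suc by (rule sum.union_disjoint) (auto simp: d2)
    also have "(\<Sum>(x, y)\<in>nn_pairs k m. ?t x * ?t y) = (\<Sum>(x, y)\<in>nn_pairs k m. \<sigma> x * \<sigma> y)"
      by (rule sum.cong) (auto dest!: nn_in_ball simp: join_in)
    also have "(\<Sum>(x, y)\<in>(\<lambda>y. (butlast y, y)) ` ?W. ?t x * ?t y) =
        (\<Sum>y\<in>?W. \<sigma> (butlast y) * \<omega> y)"
      by (subst sum.reindex[OF i2]) (auto intro!: sum.cong simp: join_in join_out bl_in_ball)
    finally show ?thesis .
  qed
  show ?thesis unfolding hamiltonian_def s1 s2 by (simp add: algebra_simps)
qed

lemma bt_split:
  "boundary_term k h (Suc m) (join_conf k (Suc m) \<sigma> \<omega>) =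
     (\<Sum>y\<in>sphere_W k (Suc m). \<sigma> (butlast y) * \<omega> y * h (butlast y) y (\<sigma> (butlast y)) (\<omega> y))"
  unfolding boundary_term_def diff_Suc_1 sum_sphere_Suc
  by (rule sum.cong) (auto simp: join_in join_out bl_in_ball)

lemma bt_m:
  assumes "m \<ge> 1"
  shows "boundary_term k h m \<sigma> =
     (\<Sum>x\<in>sphere_W k m. \<sigma> (butlast x) * \<sigma> x * h (butlast x) x (\<sigma> (butlast x)) (\<sigma> x))"
proof -
  obtain m' where m: "m = Suc m'" using assms by (cases m) auto
  show ?thesis unfolding boundary_term_def m diff_Suc_1 sum_sphere_Suc ..
qed

lemma conf_vals: "\<sigma> \<in> configs_on A \<Longrightarrow> x \<in> A \<Longrightarrow> \<sigma> x = -1 \<or> \<sigma> x = 1"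
  by (auto simp: configs_on_def PiE_iff)

lemma sum_configs_split:
  "(\<Sum>\<tau>\<in>configs_on (ball_V k (Suc m)). G \<tau>) =
   (\<Sum>\<sigma>\<in>configs_on (ball_V k m). \<Sum>\<omega>\<in>configs_on (sphere_W k (Suc m)). G (join_conf k (Suc m) \<sigma> \<omega>))"
proof -
  have "(\<Sum>\<sigma>\<in>configs_on (ball_V k m). \<Sum>\<omega>\<in>configs_on (sphere_W k (Suc m)). G (join_conf k (Suc m) \<sigma> \<omega>))
     = (\<Sum>(\<sigma>,\<omega>)\<in>configs_on (ball_V k m) \<times> configs_on (sphere_W k (Suc m)). G (join_conf k (Suc m) \<sigma> \<omega>))"
    by (rule sum.cartesian_product)
  also have "\<dots> = (\<Sum>\<tau>\<in>configs_on (ball_V k (Suc m)). G \<tau>)"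
  proof (rule sum.reindex_bij_witness[where j="\<lambda>(\<sigma>,\<omega>). join_conf k (Suc m) \<sigma> \<omega>"
        and i="\<lambda>\<tau>. (restrict \<tau> (ball_V k m), restrict \<tau> (sphere_W k (Suc m)))"])
    fix a assume a: "a \<in> configs_on (ball_V k m) \<times> configs_on (sphere_W k (Suc m))"
    then obtain \<sigma> \<omega> where ae: "a = (\<sigma>, \<omega>)" and s: "\<sigma> \<in> configs_on (ball_V k m)"
      and w: "\<omega> \<in> configs_on (sphere_W k (Suc m))" by auto
    show "(\<lambda>\<tau>. (restrict \<tau> (ball_V k m), restrict \<tau> (sphere_W k (Suc m)))) ((\<lambda>(\<sigma>,\<omega>). join_conf k (Suc m) \<sigma> \<omega>) a) = a"
      using s w sphere_not_ball unfolding ae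
      by (auto simp: configs_on_def join_conf_def fun_eq_iff PiE_iff extensional_def)
    show "(\<lambda>(\<sigma>,\<omega>). join_conf k (Suc m) \<sigma> \<omega>) a \<in> configs_on (ball_V k (Suc m))"
      using s w unfolding ae
      by (auto simp: configs_on_def join_conf_def PiE_iff extensional_def ball_Suc)
    show "G ((\<lambda>(\<sigma>,\<omega>). join_conf k (Suc m) \<sigma> \<omega>) a) = (case a of (\<sigma>,\<omega>) \<Rightarrow> G (join_conf k (Suc m) \<sigma> \<omega>))"
      unfolding ae by simp
  next
    fix b assume b: "b \<in> configs_on (ball_V k (Suc m))"
    show "(\<lambda>(\<sigma>,\<omega>). join_conf k (Suc m) \<sigma> \<omega>) ((\<lambda>\<tau>. (restrict \<tau> (ball_V k m), restrict \<tau> (sphere_W k (Suc m)))) b) = b"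
      using b by (auto simp: configs_on_def join_conf_def fun_eq_iff PiE_iff extensional_def ball_Suc)
    show "(\<lambda>\<tau>. (restrict \<tau> (ball_V k m), restrict \<tau> (sphere_W k (Suc m)))) b
          \<in> configs_on (ball_V k m) \<times> configs_on (sphere_W k (Suc m))"
      using b by (auto simp: configs_on_def PiE_iff ball_Suc)
  qed
  finally show ?thesis by simp
qed



definition hsol :: "real \<Rightarrow> (nat list \<Rightarrow> nat list \<Rightarrow> real) \<Rightarrow> (nat list \<Rightarrow> nat list \<Rightarrow> real)
     \<Rightarrow> (nat list \<Rightarrow> nat list \<Rightarrow> real) \<Rightarrow> bfield" where
  "hsol a u1 u2 u3 x y s t = (if s = 1 then (if t = 1 then ln (u1 x y / a) else ln (u3 x y / u1 x y))
       else (if t = 1 then 0 else ln (u2 x y / a)))"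

definition Ffun :: "real \<Rightarrow> real \<Rightarrow> real \<Rightarrow> bfield \<Rightarrow> nat list \<Rightarrow> nat list \<Rightarrow> real \<Rightarrow> real \<Rightarrow> real" where
  "Ffun \<beta> J Jp h x y s r = (\<Sum>t\<in>{-1,1}. exp (\<beta>*Jp*s*t + \<beta>*J*r*t + r*t*h x y r t))"

lemma Ffun_pos: "Ffun \<beta> J Jp h x y s r > 0"
  unfolding Ffun_def by (rule sum_pos) auto

lemma Ffun_vals:
  fixes a \<beta> J Jp :: real
  assumes a: "a = exp (2*\<beta>*J)" and u: "u1 x y > 0" "u2 x y > 0" "u3 x y > 0"
  defines "P \<equiv> exp (\<beta>*J)" and "Q \<equiv> exp (\<beta>*Jp)"
  shows "Ffun \<beta> J Jp (hsol a u1 u2 u3) x y 1 1 = Q*P*(u1 x y/a) + u1 x y/(Q*P*u3 x y)"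
    and "Ffun \<beta> J Jp (hsol a u1 u2 u3) x y (-1) 1 = P/Q*(u1 x y/a) + Q*u1 x y/(P*u3 x y)"
    and "Ffun \<beta> J Jp (hsol a u1 u2 u3) x y 1 (-1) = Q/P + P/Q*(u2 x y/a)"
    and "Ffun \<beta> J Jp (hsol a u1 u2 u3) x y (-1) (-1) = 1/(Q*P) + Q*P*(u2 x y/a)"
proof -
  have ap: "a > 0" using a by simp
  note e = exp_add exp_diff exp_minus exp_ln u ap P_def Q_def
  show "Ffun \<beta> J Jp (hsol a u1 u2 u3) x y 1 1 = Q*P*(u1 x y/a) + u1 x y/(Q*P*u3 x y)"
    unfolding Ffun_def hsol_def by (simp add: e field_simps)
  show "Ffun \<beta> J Jp (hsol a u1 u2 u3) x y (-1) 1 = P/Q*(u1 x y/a) + Q*u1 x y/(P*u3 x y)"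
    unfolding Ffun_def hsol_def by (simp add: e field_simps)
  show "Ffun \<beta> J Jp (hsol a u1 u2 u3) x y 1 (-1) = Q/P + P/Q*(u2 x y/a)"
    unfolding Ffun_def hsol_def by (simp add: e field_simps)
  show "Ffun \<beta> J Jp (hsol a u1 u2 u3) x y (-1) (-1) = 1/(Q*P) + Q*P*(u2 x y/a)"
    unfolding Ffun_def hsol_def by (simp add: e field_simps)
qed

lemma edge_alg:
  fixes P Q a b U1 U2 U3 :: real
  assumes p: "P > 0" "Q > 0" "U1 > 0" "U2 > 0" "U3 > 0" and ab: "a = P^2" "b = Q^2"
  defines "M \<equiv> P/Q*(U1/a) + Q*U1/(P*U3)"
  shows "Q*P*(U1/a) + U1/(Q*P*U3) = M * ((b*U3+1)/(U3+b))"
    and "1/(Q*P) + Q*P*(U2/a) = M * (((b*U2+1)*U3)/((U3+b)*U1))"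
    and "Q/P + P/Q*(U2/a) = M * ((b*U3+1)/(U3+b)) / (((b*U3+1)*U1)/((U2+b)*U3))"
proof -
  have bp: "b > 0" using ab p by simp
  define S where "S = U3 + b"
  define T where "T = b*U3+1"
  define R where "R = U2 + b"
  define V where "V = b*U2+1"
  have n1: "S > 0" "T > 0" "R > 0" "V > 0" using bp p unfolding S_def T_def R_def V_def
    by (auto intro: add_pos_pos)
  have Me: "M = U1*S/(P*Q*U3)" unfolding M_def ab S_def using p by (simp add: field_simps power2_eq_square)
  have L1: "Q*P*(U1/a) + U1/(Q*P*U3) = U1*T/(P*Q*U3)" unfolding ab T_def using p by (simp add: field_simps power2_eq_square)
  have L2: "1/(Q*P) + Q*P*(U2/a) = V/(P*Q)" unfolding ab V_def using p by (simp add: field_simps power2_eq_square)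
  have L3: "Q/P + P/Q*(U2/a) = R/(P*Q)" unfolding ab R_def using p by (simp add: field_simps power2_eq_square)
  show "Q*P*(U1/a) + U1/(Q*P*U3) = M * ((b*U3+1)/(U3+b))"
    unfolding L1 Me T_def[symmetric] S_def[symmetric] using n1 p by (simp add: field_simps)
  show "1/(Q*P) + Q*P*(U2/a) = M * (((b*U2+1)*U3)/((U3+b)*U1))"
    unfolding L2 Me V_def[symmetric] S_def[symmetric] using n1 p by (simp add: field_simps)
  show "Q/P + P/Q*(U2/a) = M * ((b*U3+1)/(U3+b)) / (((b*U3+1)*U1)/((U2+b)*U3))"
    unfolding L3 Me T_def[symmetric] S_def[symmetric] R_def[symmetric] using n1 p by (simp add: field_simps)
qed


lemma sphere_tree: "x \<in> sphere_W k m \<Longrightarrow> x \<in> tree_V k"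
  by (simp add: sphere_W_def)

lemma key:
  fixes a b \<beta> J Jp :: real
  assumes a: "a = exp (2*\<beta>*J)" and b: "b = exp (2*\<beta>*Jp)"
    and pos: "\<forall>x \<in> tree_V k. \<forall>y \<in> succs k x. u1 x y > 0 \<and> u2 x y > 0 \<and> u3 x y > 0"
    and eq: "\<forall>x \<in> tree_V k. \<forall>y \<in> succs k x.
       u1 x y = a * (\<Prod>z \<in> succs k y. (b * u3 y z + 1) / (u3 y z + b)) \<and>
       u2 x y = a * (\<Prod>z \<in> succs k y. ((b * u2 y z + 1) * u3 y z) / ((u3 y z + b) * u1 y z)) \<and>
       u3 x y = a * (\<Prod>z \<in> succs k y. ((b * u3 y z + 1) * u1 y z) / ((u2 y z + b) * u3 y z))"
    and x: "x \<in> sphere_W k m" and m: "m \<ge> 1" and s: "s \<in> {-1,1}" and r: "r \<in> {-1,1}"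
  shows "(\<Prod>y\<in>succs k x. Ffun \<beta> J Jp (hsol a u1 u2 u3) x y s r) =
     (\<Prod>y\<in>succs k x. Ffun \<beta> J Jp (hsol a u1 u2 u3) x y (-1) 1) * exp (s*r*hsol a u1 u2 u3 (butlast x) x s r)"
proof -
  define P where "P = exp (\<beta>*J)"
  define Q where "Q = exp (\<beta>*Jp)"
  have PQ: "P > 0" "Q > 0" unfolding P_def Q_def by auto
  have aP: "a = P^2" unfolding a P_def by (simp add: power2_eq_square exp_add[symmetric])
  have bQ: "b = Q^2" unfolding b Q_def by (simp add: power2_eq_square exp_add[symmetric])
  have ap: "a > 0" using a by simp
  obtain m' where m': "m = Suc m'" using m by (cases m) auto
  let ?w = "butlast x"
  have w: "?w \<in> tree_V k" "x \<in> succs k ?w"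
    using sphere_Suc_D[OF x[unfolded m']] sphere_tree by auto
  have xt: "x \<in> tree_V k" using x sphere_tree by auto
  let ?F = "Ffun \<beta> J Jp (hsol a u1 u2 u3)"
  let ?q1 = "\<lambda>z. (b * u3 x z + 1) / (u3 x z + b)"
  let ?q2 = "\<lambda>z. ((b * u2 x z + 1) * u3 x z) / ((u3 x z + b) * u1 x z)"
  let ?q3 = "\<lambda>z. ((b * u3 x z + 1) * u1 x z) / ((u2 x z + b) * u3 x z)"
  have E: "?F x y 1 1 = ?F x y (-1) 1 * ?q1 y"
          "?F x y (-1) (-1) = ?F x y (-1) 1 * ?q2 y"
          "?F x y 1 (-1) = ?F x y (-1) 1 * ?q1 y / ?q3 y" if y: "y \<in> succs k x" for y
  proof -
    have u: "u1 x y > 0" "u2 x y > 0" "u3 x y > 0" using pos xt y by auto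
    note V = Ffun_vals[where ?u1.0=u1 and ?u2.0=u2 and ?u3.0=u3 and x=x and y=y and Jp=Jp, OF a u, folded P_def Q_def]
    note A = edge_alg[OF PQ u aP bQ]
    show "?F x y 1 1 = ?F x y (-1) 1 * ?q1 y" unfolding V by (rule A(1))
    show "?F x y (-1) (-1) = ?F x y (-1) 1 * ?q2 y" unfolding V by (rule A(2))
    show "?F x y 1 (-1) = ?F x y (-1) 1 * ?q1 y / ?q3 y" unfolding V by (rule A(3))
  qed
  have ew: "u1 ?w x = a * prod ?q1 (succs k x)" "u2 ?w x = a * prod ?q2 (succs k x)"
     "u3 ?w x = a * prod ?q3 (succs k x)" using eq w by auto
  have uw: "u1 ?w x > 0" "u2 ?w x > 0" "u3 ?w x > 0" using pos w by auto
  let ?c = "\<Prod>y\<in>succs k x. ?F x y (-1) 1"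
  from s r consider "s = 1" "r = 1" | "s = -1" "r = 1" | "s = 1" "r = -1" | "s = -1" "r = -1" by auto
  then show ?thesis
  proof cases
    case 1
    have "(\<Prod>y\<in>succs k x. ?F x y s r) = (\<Prod>y\<in>succs k x. ?F x y (-1) 1 * ?q1 y)"
      using 1 E(1) by (auto intro: prod.cong)
    also have "\<dots> = ?c * prod ?q1 (succs k x)" by (rule prod.distrib)
    also have "\<dots> = ?c * (u1 ?w x / a)" using ew ap by simp
    finally show ?thesis using 1 uw ap by (simp add: hsol_def)
  next
    case 2
    then show ?thesis by (simp add: hsol_def)
  next
    case 3
    have "(\<Prod>y\<in>succs k x. ?F x y s r) = (\<Prod>y\<in>succs k x. ?F x y (-1) 1 * ?q1 y / ?q3 y)"
      using 3 E(3) by (auto intro: prod.cong)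
    also have "\<dots> = ?c * prod ?q1 (succs k x) / prod ?q3 (succs k x)"
      by (simp only: prod_dividef prod.distrib)
    also have "\<dots> = ?c * ((u1 ?w x / a) / (u3 ?w x / a))" using ew ap by simp
    also have "\<dots> = ?c * (u1 ?w x / u3 ?w x)" using ap by simp
    finally show ?thesis using 3 uw ap by (simp add: hsol_def exp_minus ln_div exp_diff)
  next
    case 4
    have "(\<Prod>y\<in>succs k x. ?F x y s r) = (\<Prod>y\<in>succs k x. ?F x y (-1) 1 * ?q2 y)"
      using 4 E(2) by (auto intro: prod.cong)
    also have "\<dots> = ?c * prod ?q2 (succs k x)" by (rule prod.distrib)
    also have "\<dots> = ?c * (u2 ?w x / a)" using ew ap by simp
    finally show ?thesis using 4 uw ap by (simp add: hsol_def)
  qed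
qed



lemma omega_sum:
  assumes m: "m \<ge> 1"
  shows "(\<Sum>\<omega>\<in>configs_on (sphere_W k (Suc m)). gibbs_weight k \<beta> J Jp h (Suc m) (join_conf k (Suc m) \<sigma> \<omega>))
    = exp (-\<beta> * hamiltonian k J Jp m \<sigma>) *
      (\<Prod>x\<in>sphere_W k m. \<Prod>y\<in>succs k x. Ffun \<beta> J Jp h x y (\<sigma> (butlast x)) (\<sigma> x))"
proof -
  let ?W = "sphere_W k (Suc m)"
  define g where "g y t = \<beta>*Jp*\<sigma> (butlast (butlast y))*t + \<beta>*J*\<sigma> (butlast y)*t
      + \<sigma> (butlast y)*t*h (butlast y) y (\<sigma> (butlast y)) t" for y t
  have ex: "gibbs_weight k \<beta> J Jp h (Suc m) (join_conf k (Suc m) \<sigma> \<omega>)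
      = exp (-\<beta> * hamiltonian k J Jp m \<sigma>) * (\<Prod>y\<in>?W. exp (g y (\<omega> y)))" for \<omega>
  proof -
    have "(\<Sum>y\<in>?W. g y (\<omega> y)) = \<beta>*Jp*(\<Sum>y\<in>?W. \<sigma> (butlast (butlast y)) * \<omega> y)
       + \<beta>*J*(\<Sum>y\<in>?W. \<sigma> (butlast y) * \<omega> y)
       + (\<Sum>y\<in>?W. \<sigma> (butlast y) * \<omega> y * h (butlast y) y (\<sigma> (butlast y)) (\<omega> y))"
      unfolding g_def by (simp add: sum.distrib sum_distrib_left algebra_simps)
    hence X: "- \<beta> * hamiltonian k J Jp (Suc m) (join_conf k (Suc m) \<sigma> \<omega>)
            + boundary_term k h (Suc m) (join_conf k (Suc m) \<sigma> \<omega>)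
         = -\<beta> * hamiltonian k J Jp m \<sigma> + (\<Sum>y\<in>?W. g y (\<omega> y))"
      unfolding ham_split[OF m] bt_split by (simp add: algebra_simps)
    show ?thesis unfolding gibbs_weight_def X exp_add exp_sum[OF finite_sphere] ..
  qed
  have "(\<Sum>\<omega>\<in>configs_on ?W. gibbs_weight k \<beta> J Jp h (Suc m) (join_conf k (Suc m) \<sigma> \<omega>))
     = exp (-\<beta> * hamiltonian k J Jp m \<sigma>) * (\<Sum>\<omega>\<in>configs_on ?W. \<Prod>y\<in>?W. exp (g y (\<omega> y)))"
    unfolding ex by (simp add: sum_distrib_left)
  also have "(\<Sum>\<omega>\<in>configs_on ?W. \<Prod>y\<in>?W. exp (g y (\<omega> y))) = (\<Prod>y\<in>?W. \<Sum>t\<in>{-1,1}. exp (g y t))"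
    unfolding configs_on_def by (rule prod_sum_PiE[symmetric]) auto
  also have "\<dots> = (\<Prod>y\<in>?W. Ffun \<beta> J Jp h (butlast y) y (\<sigma> (butlast (butlast y))) (\<sigma> (butlast y)))"
    unfolding Ffun_def g_def ..
  also have "\<dots> = (\<Prod>x\<in>sphere_W k m. \<Prod>y\<in>succs k x. Ffun \<beta> J Jp h x y (\<sigma> (butlast x)) (\<sigma> x))"
    by (rule prod_sphere_Suc[symmetric])
  finally show ?thesis .
qed

lemma uniq:
  fixes a :: real
  assumes a: "a > 0" and r1: "u_h_rel k a u1 u2 u3 h" and r2: "u_h_rel k a u1 u2 u3 h'"
    and n: "n \<ge> 1" and s: "\<sigma> \<in> configs_on (ball_V k n)"
  shows "mu_n k \<beta> J Jp h n \<sigma> = mu_n k \<beta> J Jp h' n \<sigma>"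
proof -
  define t where "t x y = h' x y (-1) 1 - h x y (-1) 1" for x y
  define T where "T = (\<Sum>x\<in>sphere_W k (n-1). \<Sum>y\<in>succs k x. t x y)"
  have edge: "p*q*h' x y p q = p*q*h x y p q - t x y"
    if x: "x \<in> tree_V k" and y: "y \<in> succs k x" and p: "p \<in> {-1,1}" and q: "q \<in> {-1,1}" for x y p q
  proof -
    have e1: "h' x y 1 1 + h' x y (-1) 1 = h x y 1 1 + h x y (-1) 1"
      and e2: "h' x y (-1) (-1) + h' x y (-1) 1 = h x y (-1) (-1) + h x y (-1) 1"
      and e3: "h' x y 1 1 + h' x y 1 (-1) = h x y 1 1 + h x y 1 (-1)"
      using r1 r2 x y a unfolding u_h_rel_def by auto
    show ?thesis using p q e1 e2 e3 unfolding t_def by auto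
  qed
  have bt: "boundary_term k h' n \<tau> = boundary_term k h n \<tau> - T" if tau: "\<tau> \<in> configs_on (ball_V k n)" for \<tau>
  proof -
    have "boundary_term k h' n \<tau> = (\<Sum>x\<in>sphere_W k (n-1). \<Sum>y\<in>succs k x. \<tau> x * \<tau> y * h x y (\<tau> x) (\<tau> y) - t x y)"
      unfolding boundary_term_def
    proof (intro sum.cong refl)
      fix x y assume x: "x \<in> sphere_W k (n-1)" and y: "y \<in> succs k x"
      have xb: "x \<in> ball_V k n" using x by (auto simp: sphere_W_def ball_V_def)
      have yb: "y \<in> ball_V k n" using succs_sphere[OF x y] n by (auto simp: sphere_W_def ball_V_def)
      show "\<tau> x * \<tau> y * h' x y (\<tau> x) (\<tau> y) = \<tau> x * \<tau> y * h x y (\<tau> x) (\<tau> y) - t x y"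
        using edge[of x y "\<tau> x" "\<tau> y"] x y conf_vals[OF tau xb] conf_vals[OF tau yb]
        by (auto simp: sphere_W_def)
    qed
    also have "\<dots> = boundary_term k h n \<tau> - T"
      unfolding boundary_term_def T_def by (simp add: sum_subtractf)
    finally show ?thesis .
  qed
  have gw: "gibbs_weight k \<beta> J Jp h' n \<tau> = gibbs_weight k \<beta> J Jp h n \<tau> * exp (-T)"
    if "\<tau> \<in> configs_on (ball_V k n)" for \<tau>
    unfolding gibbs_weight_def bt[OF that] by (simp add: exp_add[symmetric])
  have Z: "partition_fn k \<beta> J Jp h' n = partition_fn k \<beta> J Jp h n * exp (-T)"
    unfolding partition_fn_def by (simp add: gw sum_distrib_right)
  show ?thesis unfolding mu_n_def Z gw[OF s] by simp
qed



theorem theorem3p4: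
  fixes k :: nat and \<beta> J Jp a b :: real
    and u1 u2 u3 :: "nat list \<Rightarrow> nat list \<Rightarrow> real"
  assumes "k \<ge> 1" and "\<beta> > 0"
    and "a = exp (2 * \<beta> * J)" and "b = exp (2 * \<beta> * Jp)"
    and pos: "\<forall>x \<in> tree_V k. \<forall>y \<in> succs k x. u1 x y > 0 \<and> u2 x y > 0 \<and> u3 x y > 0"
    and eq: "\<forall>x \<in> tree_V k. \<forall>y \<in> succs k x.
       u1 x y = a * (\<Prod>z \<in> succs k y. (b * u3 y z + 1) / (u3 y z + b)) \<and>
       u2 x y = a * (\<Prod>z \<in> succs k y. ((b * u2 y z + 1) * u3 y z) / ((u3 y z + b) * u1 y z)) \<and>
       u3 x y = a * (\<Prod>z \<in> succs k y. ((b * u3 y z + 1) * u1 y z) / ((u2 y z + b) * u3 y z))"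
  shows "(\<exists>h. u_h_rel k a u1 u2 u3 h \<and> compatible k \<beta> J Jp h)
       \<and> (\<forall>h h'. u_h_rel k a u1 u2 u3 h \<and> u_h_rel k a u1 u2 u3 h' \<longrightarrow>
            (\<forall>n \<ge> 1. \<forall>\<sigma> \<in> configs_on (ball_V k n).
               mu_n k \<beta> J Jp h n \<sigma> = mu_n k \<beta> J Jp h' n \<sigma>))"
proof
  have ap: "a > 0" using assms(3) by simp
  show "\<forall>h h'. u_h_rel k a u1 u2 u3 h \<and> u_h_rel k a u1 u2 u3 h' \<longrightarrow>
            (\<forall>n \<ge> 1. \<forall>\<sigma> \<in> configs_on (ball_V k n).
               mu_n k \<beta> J Jp h n \<sigma> = mu_n k \<beta> J Jp h' n \<sigma>)"
    using uniq[OF ap] by blast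
  let ?h = "hsol a u1 u2 u3"
  have rel: "u_h_rel k a u1 u2 u3 ?h"
    unfolding u_h_rel_def hsol_def using pos ap by (fastforce simp: exp_add)
  have comp: "compatible k \<beta> J Jp ?h"
    unfolding compatible_def
  proof (intro allI impI ballI)
    fix n \<sigma> assume n: "2 \<le> n" and s: "\<sigma> \<in> configs_on (ball_V k (n - 1))"
    obtain m where nm: "n = Suc m" and m: "m \<ge> 1" using n by (cases n) auto
    have s': "\<sigma> \<in> configs_on (ball_V k m)" using s nm by simp
    define K where "K = (\<Prod>x\<in>sphere_W k m. \<Prod>y\<in>succs k x. Ffun \<beta> J Jp ?h x y (-1) 1)"
    have Kp: "K > 0" unfolding K_def by (intro prod_pos) (simp add: Ffun_pos)
    have G: "(\<Sum>\<omega>\<in>configs_on (sphere_W k (Suc m)). gibbs_weight k \<beta> J Jp ?h (Suc m) (join_conf k (Suc m) \<tau> \<omega>))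
         = K * gibbs_weight k \<beta> J Jp ?h m \<tau>" if t: "\<tau> \<in> configs_on (ball_V k m)" for \<tau>
    proof -
      have "(\<Prod>x\<in>sphere_W k m. \<Prod>y\<in>succs k x. Ffun \<beta> J Jp ?h x y (\<tau> (butlast x)) (\<tau> x))
          = (\<Prod>x\<in>sphere_W k m. (\<Prod>y\<in>succs k x. Ffun \<beta> J Jp ?h x y (-1) 1) *
               exp (\<tau> (butlast x) * \<tau> x * ?h (butlast x) x (\<tau> (butlast x)) (\<tau> x)))"
      proof (rule prod.cong[OF refl])
        fix x assume x: "x \<in> sphere_W k m"
        obtain m' where m': "m = Suc m'" using m by (cases m) auto
        have xb: "x \<in> ball_V k m" using x by (rule sphere_in_ball)
        have "butlast x \<in> ball_V k m'" using bl_in_ball[OF x[unfolded m']] .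
        hence bb: "butlast x \<in> ball_V k m" unfolding m' by (auto simp: ball_V_def)
        show "(\<Prod>y\<in>succs k x. Ffun \<beta> J Jp ?h x y (\<tau> (butlast x)) (\<tau> x)) =
          (\<Prod>y\<in>succs k x. Ffun \<beta> J Jp ?h x y (-1) 1) *
               exp (\<tau> (butlast x) * \<tau> x * ?h (butlast x) x (\<tau> (butlast x)) (\<tau> x))"
          by (rule key[OF assms(3,4) pos eq x m]) (use conf_vals[OF t xb] conf_vals[OF t bb] in auto)
      qed
      also have "\<dots> = K * exp (boundary_term k ?h m \<tau>)"
        unfolding K_def bt_m[OF m] exp_sum[OF finite_sphere] by (rule prod.distrib)
      finally have P: "(\<Prod>x\<in>sphere_W k m. \<Prod>y\<in>succs k x. Ffun \<beta> J Jp ?h x y (\<tau> (butlast x)) (\<tau> x)) = K * exp (boundary_term k ?h m \<tau>)" .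
      show ?thesis by (subst omega_sum[OF m]) (simp add: P gibbs_weight_def exp_add[symmetric])
    qed
    have Z: "partition_fn k \<beta> J Jp ?h (Suc m) = K * partition_fn k \<beta> J Jp ?h m"
      unfolding partition_fn_def sum_configs_split by (simp add: G sum_distrib_left)
    have Zp: "partition_fn k \<beta> J Jp ?h m > 0"
      unfolding partition_fn_def gibbs_weight_def
    proof (rule sum_pos)
      show "finite (configs_on (ball_V k m))" unfolding configs_on_def by (simp add: finite_PiE)
      show "configs_on (ball_V k m) \<noteq> {}" unfolding configs_on_def by (simp add: PiE_eq_empty_iff)
    qed simp
    show "(\<Sum>\<omega>\<in>configs_on (sphere_W k n). mu_n k \<beta> J Jp ?h n (join_conf k n \<sigma> \<omega>)) = mu_n k \<beta> J Jp ?h (n - 1) \<sigma>"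
      unfolding nm diff_Suc_1 mu_n_def sum_divide_distrib[symmetric] G[OF s'] Z
      using Kp Zp by simp
  qed
  show "\<exists>h. u_h_rel k a u1 u2 u3 h \<and> compatible k \<beta> J Jp h" using rel comp by blast
qed

end
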